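(* Let $\mathcal{H},\mathcal{K}$ be complex Hilbert spaces with $\dim\mathcal{H}>0$, let $(f_*,f^* ):(\mathsf{P}(\mathcal{H}),\mathsf{L}(\mathcal{H}),\bar e_{\mathcal{H}})\to(\mathsf{P}(\mathcal{K}),\mathsf{L}(\mathcal{K}),\bar e_{\mathcal{K}})$ be a Chu morphism, and let $(g,\sigma)$ be a semilinear map $\mathcal{H}\to\mathcal{K}$ with $g(\psi)\ne0$ and $f_*([\psi])=[g(\psi)]$ for all nonzero $\psi\in\mathcal{H}$. If the field endomorphism $\sigma:\mathbb{C}\to\mathbb{C}$ is surjective, then $g$ is surjective.
   Context: A Chu morphism $(X,A,e)\to(X',A',e')$ between Chu spaces over $[0,1]$ (with $e:X\times A\to[0,1]$) is a pair $(f_*:X\to X',f^*:A'\to A)$ with $e(x,f^*(a'))=e'(f_*(x),a')$ for all $x,a'$. For a complex Hilbert space $\mathcal{H}$: $\mathsf{L}(\mathcal{H})$ is the set of closed subspaces, $P_S$ the orthogonal projector onto $S$, $\mathsf{P}(\mathcal{H})$ the set of rays $[\psi]=\{\lambda\psi:\lambda\in\mathbb{C}\}$, $\psi\ne0$, and $\bar e_{\mathcal{H}}([\psi],S)=\|P_S\psi\|^2/\|\psi\|^2$. A semilinear map $(g,\sigma):V_1\to V_2$ consists of a field homomorphism $\sigma:\mathbb{C}\to\mathbb{C}$ and an additive map $g$ with $g(\lambda v)=\sigma(\lambda)g(v)$. *)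

theory Defs
  imports "HOL-Analysis.Analysis"
begin

text \<open>A complex Hilbert space: a complete real inner product space carrying a complex
  scalar multiplication (compatible with the real one) and a complex inner product
  (conjugate-linear in the first argument, Hermitian) whose real part is the real inner
  product; hence norm x = sqrt (Re (cinner x x)).\<close>

class chilbert_space = real_inner + complete_space +
  fixes cscale :: "complex \<Rightarrow> 'a \<Rightarrow> 'a"
    and cinner :: "'a \<Rightarrow> 'a \<Rightarrow> complex"
  assumes cscale_add_right: "cscale c (x + y) = cscale c x + cscale c y"
    and cscale_add_left: "cscale (c + d) x = cscale c x + cscale d x"
    and cscale_cscale: "cscale c (cscale d x) = cscale (c * d) x"
    and cscale_one: "cscale 1 x = x"
    and scaleR_cscale: "scaleR r x = cscale (complex_of_real r) x"
    and cinner_commute: "cinner x y = cnj (cinner y x)"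
    and cinner_add_left: "cinner (x + y) z = cinner x z + cinner y z"
    and cinner_cscale_left: "cinner (cscale c x) y = cnj c * cinner x y"
    and inner_Re_cinner: "inner x y = Re (cinner x y)"

definition csubspace :: "'a::chilbert_space set \<Rightarrow> bool" where
  "csubspace S \<longleftrightarrow> 0 \<in> S \<and> (\<forall>x\<in>S. \<forall>y\<in>S. x + y \<in> S) \<and> (\<forall>c. \<forall>x\<in>S. cscale c x \<in> S)"

definition closed_subspaces :: "'a::chilbert_space set set" where
  "closed_subspaces = {S. csubspace S \<and> closed S}"

definition proj :: "'a::chilbert_space set \<Rightarrow> 'a \<Rightarrow> 'a" where
  "proj S \<psi> = (THE p. p \<in> S \<and> (\<forall>s\<in>S. cinner s (\<psi> - p) = 0))"

definition ray :: "'a::chilbert_space \<Rightarrow> 'a set" where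
  "ray \<psi> = range (\<lambda>c. cscale c \<psi>)"

definition rays :: "'a::chilbert_space set set" where
  "rays = {ray \<psi> | \<psi>. \<psi> \<noteq> 0}"

text \<open>The evaluation ebar([psi], S) = norm (P_S psi)^2 / norm psi^2, for a chosen
  nonzero representative psi of the ray (independent of the choice).\<close>
definition ebar :: "'a::chilbert_space set \<Rightarrow> 'a set \<Rightarrow> real" where
  "ebar r S = (let \<psi> = (SOME \<psi>. \<psi> \<noteq> 0 \<and> ray \<psi> = r)
               in (norm (proj S \<psi>))\<^sup>2 / (norm \<psi>)\<^sup>2)"

definition chu_morphism ::
  "'x set \<Rightarrow> 'a set \<Rightarrow> ('x \<Rightarrow> 'a \<Rightarrow> real) \<Rightarrow>
   'y set \<Rightarrow> 'b set \<Rightarrow> ('y \<Rightarrow> 'b \<Rightarrow> real) \<Rightarrow>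
   ('x \<Rightarrow> 'y) \<Rightarrow> ('b \<Rightarrow> 'a) \<Rightarrow> bool" where
  "chu_morphism X A e X' A' e' f_low f_up \<longleftrightarrow>
     (\<forall>x\<in>X. f_low x \<in> X') \<and> (\<forall>a'\<in>A'. f_up a' \<in> A) \<and>
     (\<forall>x\<in>X. \<forall>a'\<in>A'. e x (f_up a') = e' (f_low x) a')"

definition field_hom :: "(complex \<Rightarrow> complex) \<Rightarrow> bool" where
  "field_hom \<sigma> \<longleftrightarrow> (\<forall>a b. \<sigma> (a + b) = \<sigma> a + \<sigma> b) \<and>
                     (\<forall>a b. \<sigma> (a * b) = \<sigma> a * \<sigma> b) \<and> \<sigma> 1 = 1"

definition semilinear ::
  "('a::chilbert_space \<Rightarrow> 'b::chilbert_space) \<Rightarrow> (complex \<Rightarrow> complex) \<Rightarrow> bool" where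
  "semilinear g \<sigma> \<longleftrightarrow> field_hom \<sigma> \<and> (\<forall>x y. g (x + y) = g x + g y) \<and>
                       (\<forall>c x. g (cscale c x) = cscale (\<sigma> c) (g x))"

end

theory Submission
  imports Defs
begin

lemma cscale_zero_left[simp]: "cscale 0 (x::'a::chilbert_space) = 0"
proof -
  have "cscale 0 x = cscale 0 x + cscale 0 x" by (metis add_0 cscale_add_left)
  thus ?thesis by simp
qed

lemma cscale_minus_left: "cscale (- c) (x::'a::chilbert_space) = - cscale c x"
  by (metis add.right_inverse add_eq_0_iff cscale_add_left cscale_zero_left)

lemma cscale_diff_left: "cscale (c - d) (x::'a::chilbert_space) = cscale c x - cscale d x"
  by (metis cscale_add_left cscale_minus_left diff_conv_add_uminus)

lemma cscale_zero_right[simp]: "cscale c (0::'a::chilbert_space) = 0"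
proof -
  have "cscale c (0::'a) = cscale c 0 + cscale c 0" by (metis add_0 cscale_add_right)
  thus ?thesis by simp
qed

lemma cinner_zero_left[simp]: "cinner (0::'a::chilbert_space) y = 0"
proof -
  have "cinner (0::'a) y = cinner 0 y + cinner 0 y" by (metis add_0 cinner_add_left)
  thus ?thesis by simp
qed

lemma cinner_zero_right[simp]: "cinner y (0::'a::chilbert_space) = 0"
  by (metis cinner_commute cinner_zero_left complex_cnj_zero)

lemma cinner_add_right: "cinner (z::'a::chilbert_space) (x + y) = cinner z x + cinner z y"
  by (metis cinner_add_left cinner_commute complex_cnj_add)

lemma cinner_minus_right: "cinner (z::'a::chilbert_space) (- x) = - cinner z x"
  by (metis add.right_inverse add_eq_0_iff cinner_add_right cinner_zero_right)

lemma cinner_diff_right: "cinner (z::'a::chilbert_space) (x - y) = cinner z x - cinner z y"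
  by (metis cinner_add_right cinner_minus_right diff_conv_add_uminus)

lemma cinner_diff_left: "cinner (x - y) (z::'a::chilbert_space) = cinner x z - cinner y z"
  by (metis cinner_commute cinner_diff_right complex_cnj_diff)

lemma cinner_cscale_right: "cinner (x::'a::chilbert_space) (cscale c y) = c * cinner x y"
  by (metis cinner_commute cinner_cscale_left complex_cnj_cnj complex_cnj_mult)

lemma cinner_self_zero: "cinner (x::'a::chilbert_space) x = 0 \<Longrightarrow> x = 0"
  by (metis inner_Re_cinner inner_eq_zero_iff zero_complex.sel(1))

lemma cinner_self_nz: "(x::'a::chilbert_space) \<noteq> 0 \<Longrightarrow> cinner x x \<noteq> 0"
  using cinner_self_zero by blast

lemma proj_unique:
  fixes S :: "'a::chilbert_space set"
  assumes cs: "csubspace S" and p: "p \<in> S" "\<forall>s\<in>S. cinner s (\<psi> - p) = 0"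
  shows "proj S \<psi> = p"
  unfolding proj_def
proof (rule the_equality)
  show "p \<in> S \<and> (\<forall>s\<in>S. cinner s (\<psi> - p) = 0)" using p by blast
next
  fix q assume q: "q \<in> S \<and> (\<forall>s\<in>S. cinner s (\<psi> - q) = 0)"
  have "q - p = q + cscale (-1) p" by (simp add: cscale_minus_left cscale_one)
  hence d: "q - p \<in> S" using cs q p unfolding csubspace_def by metis
  have "cinner (q - p) (\<psi> - p) = 0" "cinner (q - p) (\<psi> - q) = 0" using d p q by auto
  hence "cinner (q - p) ((\<psi> - p) - (\<psi> - q)) = 0" by (simp add: cinner_diff_right)
  hence "cinner (q - p) (q - p) = 0" by simp
  thus "q = p" using cinner_self_zero by fastforce
qed

lemma ray_self: "(\<psi>::'a::chilbert_space) \<in> ray \<psi>"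
  unfolding ray_def by (metis cscale_one rangeI)

lemma ebar_rep:
  fixes \<psi> :: "'a::chilbert_space"
  assumes "\<psi> \<noteq> 0"
  shows "\<exists>\<phi>. \<phi> \<noteq> 0 \<and> ray \<phi> = ray \<psi> \<and> ebar (ray \<psi>) S = (norm (proj S \<phi>))\<^sup>2 / (norm \<phi>)\<^sup>2"
proof -
  let ?\<phi> = "SOME \<phi>. \<phi> \<noteq> 0 \<and> ray \<phi> = ray \<psi>"
  have "?\<phi> \<noteq> 0 \<and> ray ?\<phi> = ray \<psi>" by (rule someI[of _ \<psi>]) (use assms in auto)
  thus ?thesis unfolding ebar_def Let_def by blast
qed

lemma csubspace_ray: "csubspace (ray (k::'a::chilbert_space))"
  unfolding csubspace_def ray_def
  by (auto simp: cscale_add_left[symmetric] cscale_cscale intro!: image_eqI[where x=0])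

lemma Im_cinner: "Im (cinner (k::'a::chilbert_space) x) = inner (cscale \<i> k) x"
  by (simp add: inner_Re_cinner cinner_cscale_left)

lemma cinner_cont: "continuous_on UNIV (\<lambda>x. cinner (k::'a::chilbert_space) x)"
proof -
  have "(\<lambda>x. cinner k x) = (\<lambda>x. Complex (inner k x) (inner (cscale \<i> k) x))"
    by (rule ext) (simp add: complex_eq_iff Im_cinner inner_Re_cinner)
  moreover have "continuous_on UNIV (\<lambda>x. Complex (inner k x) (inner (cscale \<i> k) x))"
    unfolding Complex_eq by (intro continuous_intros)
  ultimately show ?thesis by simp
qed

lemma cscale_decomp: "cscale c (k::'a::chilbert_space) = scaleR (Re c) k + scaleR (Im c) (cscale \<i> k)"
proof -
  have "c = complex_of_real (Re c) + complex_of_real (Im c) * \<i>" by (simp add: complex_eq_iff)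
  hence "cscale c k = cscale (complex_of_real (Re c)) k + cscale (complex_of_real (Im c) * \<i>) k"
    by (metis cscale_add_left)
  thus ?thesis by (simp add: scaleR_cscale cscale_cscale)
qed

lemma closed_ray:
  fixes k :: "'a::chilbert_space"
  assumes "k \<noteq> 0"
  shows "closed (ray k)"
proof -
  have kk: "cinner k k \<noteq> 0" using assms cinner_self_nz by blast
  have eq: "ray k = {x. x = cscale (cinner k x / cinner k k) k}"
  proof
    show "ray k \<subseteq> {x. x = cscale (cinner k x / cinner k k) k}"
    proof
      fix x assume "x \<in> ray k"
      then obtain d where d: "x = cscale d k" unfolding ray_def by blast
      have "cinner k x / cinner k k = d" using kk by (simp add: d cinner_cscale_right)
      thus "x \<in> {x. x = cscale (cinner k x / cinner k k) k}" using d by simp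
    qed
    show "{x. x = cscale (cinner k x / cinner k k) k} \<subseteq> ray k"
      unfolding ray_def by blast
  qed
  define h where "h = (\<lambda>x. cinner k x / cinner k k)"
  have hc: "continuous_on UNIV h"
    unfolding h_def by (intro continuous_on_divide cinner_cont continuous_on_const) (use kk in auto)
  have c: "continuous_on UNIV (\<lambda>x. scaleR (Re (h x)) k + scaleR (Im (h x)) (cscale \<i> k))"
    by (intro continuous_intros continuous_on_compose2[OF continuous_on_Re hc]
          continuous_on_compose2[OF continuous_on_Im hc]) auto
  have dd: "\<And>x. cscale (h x) k = scaleR (Re (h x)) k + scaleR (Im (h x)) (cscale \<i> k)"
    by (rule cscale_decomp)
  have "ray k = {x. x = scaleR (Re (h x)) k + scaleR (Im (h x)) (cscale \<i> k)}"
    using dd unfolding eq h_def by simp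
  thus ?thesis
    by (simp only:) (intro closed_Collect_eq continuous_on_id c)
qed

lemma proj_ray:
  fixes k :: "'a::chilbert_space"
  assumes "k \<noteq> 0"
  shows "proj (ray k) \<phi> = cscale (cinner k \<phi> / cinner k k) k"
proof (rule proj_unique[OF csubspace_ray])
  have kk: "cinner k k \<noteq> 0" using assms cinner_self_nz by blast
  show "cscale (cinner k \<phi> / cinner k k) k \<in> ray k" unfolding ray_def by blast
  show "\<forall>s\<in>ray k. cinner s (\<phi> - cscale (cinner k \<phi> / cinner k k) k) = 0"
  proof
    fix s assume "s \<in> ray k"
    then obtain d where d: "s = cscale d k" unfolding ray_def by blast
    show "cinner s (\<phi> - cscale (cinner k \<phi> / cinner k k) k) = 0"
      using kk by (simp add: d cinner_cscale_left cinner_diff_right cinner_cscale_right)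
  qed
qed

lemma cscale_eq_zero: "cscale a (k::'a::chilbert_space) = 0 \<Longrightarrow> k \<noteq> 0 \<Longrightarrow> a = 0"
  by (metis cinner_cscale_right cinner_self_nz cinner_zero_right mult_eq_0_iff)

lemma pyth:
  fixes p w :: "'a::chilbert_space"
  assumes "cinner p w = 0"
  shows "(norm (p + w))\<^sup>2 = (norm p)\<^sup>2 + (norm w)\<^sup>2"
proof -
  have "inner p w = 0" using assms by (simp add: inner_Re_cinner)
  thus ?thesis by (simp add: power2_norm_eq_inner inner_add_left inner_add_right inner_commute)
qed

theorem proposition3p11:
  fixes f_low :: "'h::chilbert_space set \<Rightarrow> 'k::chilbert_space set"
    and f_up :: "'k set \<Rightarrow> 'h set"
    and g :: "'h \<Rightarrow> 'k"
    and \<sigma> :: "complex \<Rightarrow> complex"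
  assumes nontriv: "\<exists>\<psi>::'h. \<psi> \<noteq> 0"
    and chu: "chu_morphism (rays :: 'h set set) closed_subspaces ebar
                           (rays :: 'k set set) closed_subspaces ebar f_low f_up"
    and semi: "semilinear g \<sigma>"
    and nz: "\<And>\<psi>. \<psi> \<noteq> 0 \<Longrightarrow> g \<psi> \<noteq> 0"
    and induced: "\<And>\<psi>. \<psi> \<noteq> 0 \<Longrightarrow> f_low (ray \<psi>) = ray (g \<psi>)"
    and sigma_surj: "surj \<sigma>"
  shows "surj g"
proof -
  have gadd: "\<And>x y. g (x + y) = g x + g y" and gsc: "\<And>c x. g (cscale c x) = cscale (\<sigma> c) (g x)"
    using semi unfolding semilinear_def by auto
  have g0: "g 0 = 0" using gadd[of 0 0] by simp
  have gdiff: "g (x - y) = g x - g y" for x y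
  proof -
    have "g (x - y) + g y = g x" using gadd[of "x - y" y] by simp
    thus ?thesis by (simp add: eq_diff_eq)
  qed
  have chu_eq: "\<And>\<psi> S. \<psi> \<noteq> 0 \<Longrightarrow> S \<in> closed_subspaces \<Longrightarrow>
      ebar (ray \<psi>) (f_up S) = ebar (ray (g \<psi>)) S"
  proof -
    fix \<psi> :: 'h and S :: "'k set" assume "\<psi> \<noteq> 0" "S \<in> closed_subspaces"
    moreover have "ray \<psi> \<in> rays" using \<open>\<psi> \<noteq> 0\<close> unfolding rays_def by blast
    moreover have "\<forall>x\<in>rays. \<forall>a'\<in>closed_subspaces. ebar x (f_up a') = ebar (f_low x) a'"
      using chu unfolding chu_morphism_def by (elim conjE)
    ultimately show "ebar (ray \<psi>) (f_up S) = ebar (ray (g \<psi>)) S"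
      using induced[OF \<open>\<psi> \<noteq> 0\<close>] by simp
  qed
  have fup_cs: "\<And>S. S \<in> closed_subspaces \<Longrightarrow> f_up S \<in> closed_subspaces"
    using chu unfolding chu_morphism_def by simp
  have key: "cinner k (g \<psi>) = 0" if kn: "k \<notin> range g" for k :: 'k and \<psi> :: 'h
  proof -
    have "g 0 \<in> range g" by (rule rangeI)
    hence k0: "k \<noteq> 0" using kn g0 by auto
    have kk: "cinner k k \<noteq> 0" using k0 cinner_self_nz by blast
    have Scs: "ray k \<in> closed_subspaces"
      unfolding closed_subspaces_def by (simp add: csubspace_ray closed_ray[OF k0])
    define T where "T = f_up (ray k)"
    have Tcs: "T \<in> closed_subspaces" unfolding T_def using fup_cs[OF Scs] .
    hence Tsub: "csubspace T" unfolding closed_subspaces_def by simp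
    have Tz: "T \<subseteq> {0}"
    proof
      fix \<psi> assume \<psi>T: "\<psi> \<in> T"
      show "\<psi> \<in> {0}"
      proof (rule ccontr)
        assume "\<psi> \<notin> {0}"
        hence \<psi>0: "\<psi> \<noteq> 0" by simp
        obtain \<phi> where \<phi>: "\<phi> \<noteq> 0" "ray \<phi> = ray \<psi>"
            "ebar (ray \<psi>) T = (norm (proj T \<phi>))\<^sup>2 / (norm \<phi>)\<^sup>2"
          using ebar_rep[OF \<psi>0] by blast
        have "\<phi> \<in> ray \<psi>" using \<phi>(2) ray_self[of \<phi>] by simp
        then obtain c where "\<phi> = cscale c \<psi>" unfolding ray_def by (rule rangeE)
        moreover have "\<forall>c. \<forall>x\<in>T. cscale c x \<in> T" using Tsub by (simp add: csubspace_def)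
        ultimately have "\<phi> \<in> T" using \<psi>T by simp
        hence "proj T \<phi> = \<phi>" by (intro proj_unique[OF Tsub]) auto
        hence e1: "ebar (ray \<psi>) T = 1" using \<phi> by simp
        have e2: "ebar (ray (g \<psi>)) (ray k) = 1"
          using e1 chu_eq[OF \<psi>0 Scs] unfolding T_def by simp
        have g\<psi>0: "g \<psi> \<noteq> 0" using nz[OF \<psi>0] .
        obtain vv where vv: "vv \<noteq> 0" "ray vv = ray (g \<psi>)"
            "ebar (ray (g \<psi>)) (ray k) = (norm (proj (ray k) vv))\<^sup>2 / (norm vv)\<^sup>2"
          using ebar_rep[OF g\<psi>0] by blast
        define p where "p = cscale (cinner k vv / cinner k k) k"
        have pp: "proj (ray k) vv = p" unfolding p_def using proj_ray[OF k0] .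
        have nn: "(norm p)\<^sup>2 = (norm vv)\<^sup>2" using e2 vv pp by (simp add: divide_eq_1_iff)
        have orth: "cinner p (vv - p) = 0"
          using kk by (simp add: p_def cinner_cscale_left cinner_diff_right cinner_cscale_right)
        have "(norm vv)\<^sup>2 = (norm p)\<^sup>2 + (norm (vv - p))\<^sup>2"
          using pyth[OF orth] by simp
        hence "norm (vv - p) = 0" using nn by simp
        hence vvp: "vv = p" by simp
        have "g \<psi> \<in> ray vv" using vv(2) ray_self[of "g \<psi>"] by simp
        then obtain c where c: "g \<psi> = cscale c vv" unfolding ray_def by (rule rangeE)
        define a where "a = c * (cinner k vv / cinner k k)"
        have "g \<psi> = cscale c p" using c vvp by simp
        also have "\<dots> = cscale a k" unfolding p_def a_def by (simp add: cscale_cscale)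
        finally have ga: "g \<psi> = cscale a k" .
        have a0: "a \<noteq> 0" using ga g\<psi>0 by auto
        obtain d where d: "inverse a = \<sigma> d" using surjD[OF sigma_surj, of "inverse a"] by (elim exE)
        have "k = g (cscale d \<psi>)"
          using a0 by (simp add: gsc d[symmetric] ga cscale_cscale cscale_one)
        hence "k \<in> range g" by (rule range_eqI)
        thus False using kn by contradiction
      qed
    qed
    show ?thesis
    proof (cases "\<psi> = 0")
      case True thus ?thesis by (simp add: g0)
    next
      case \<psi>0: False
      obtain \<phi> where \<phi>: "\<phi> \<noteq> 0" "ray \<phi> = ray \<psi>"
          "ebar (ray \<psi>) T = (norm (proj T \<phi>))\<^sup>2 / (norm \<phi>)\<^sup>2"
        using ebar_rep[OF \<psi>0] by blast
      have "0 \<in> T" using Tsub by (simp add: csubspace_def)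
      hence "proj T \<phi> = 0" using Tz by (intro proj_unique[OF Tsub]) auto
      hence e1: "ebar (ray \<psi>) T = 0" using \<phi> by simp
      have e2: "ebar (ray (g \<psi>)) (ray k) = 0"
        using e1 chu_eq[OF \<psi>0 Scs] unfolding T_def by simp
      have g\<psi>0: "g \<psi> \<noteq> 0" using nz[OF \<psi>0] .
      obtain vv where vv: "vv \<noteq> 0" "ray vv = ray (g \<psi>)"
          "ebar (ray (g \<psi>)) (ray k) = (norm (proj (ray k) vv))\<^sup>2 / (norm vv)\<^sup>2"
        using ebar_rep[OF g\<psi>0] by blast
      have "proj (ray k) vv = 0" using e2 vv by simp
      hence "cscale (cinner k vv / cinner k k) k = 0" using proj_ray[OF k0] by simp
      hence "cinner k vv / cinner k k = 0" using cscale_eq_zero k0 by blast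
      hence ck: "cinner k vv = 0" using kk by simp
      have "g \<psi> \<in> ray vv" using vv(2) ray_self[of "g \<psi>"] by simp
      then obtain c where c: "g \<psi> = cscale c vv" unfolding ray_def by (rule rangeE)
      show ?thesis using ck by (simp add: c cinner_cscale_right)
    qed
  qed
  obtain \<psi>0 :: 'h where \<psi>0: "\<psi>0 \<noteq> 0" using nontriv by blast
  define m where "m = g \<psi>0"
  have m0: "m \<noteq> 0" unfolding m_def using nz[OF \<psi>0] .
  show ?thesis
  proof (rule ccontr)
    assume "\<not> surj g"
    hence "range g \<noteq> UNIV" by simp
    then obtain k where kn: "k \<notin> range g" by blast
    have kmn: "k + m \<notin> range g"
    proof
      assume "k + m \<in> range g"
      then obtain \<phi> where "k + m = g \<phi>" by (rule rangeE)
      hence "k = g (\<phi> - \<psi>0)" by (simp add: gdiff m_def eq_diff_eq)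
      hence "k \<in> range g" by (rule range_eqI)
      thus False using kn by contradiction
    qed
    have "cinner (k + m) m = 0" using key[OF kmn] m_def by simp
    moreover have "cinner k m = 0" using key[OF kn] m_def by simp
    ultimately have "cinner m m = 0" by (simp add: cinner_add_left)
    thus False using m0 cinner_self_zero by blast
  qed
qed

end
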